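(* Let $(Z_0,\dots,Z_H)$ be a process on an abstract state space $\mathcal{Z}$, fix $t\in\{1,\dots,H\}$, and consider two hypotheses $H_0,H_1$ under which $Z_t$ has distributions $P^{(0)}_{Z_t}\ll P^{(1)}_{Z_t}$ with $\chi^2(P^{(0)}_{Z_t}\|P^{(1)}_{Z_t})=\Delta^2<\infty$, and under which, for $u\in\{t,\dots,H-1\}$, $Z_{u+1}$ given $Z_t,\dots,Z_u$ is distributed as $K_u(\cdot\mid Z_u)$ for Markov kernels $K_u$ common to both hypotheses with $\eta_{\chi^2}(K_u)\le\eta<1$. Let $R=g(Z_H)\in\{0,1\}$ for a fixed function $g$, and let $R^{1:n}$ denote $n$ i.i.d. samples of $R$ (drawn under $H_i$ when hypothesis $H_i$ holds, with $\mathbb{P}_i$ the corresponding probability). Fix $\epsilon\in(0,1/2)$. Then $$\inf_{\psi}\max_{i\in\{0,1\}}\mathbb{P}_i\big(\psi(R^{1:n})\neq i\big)\ \ge\ \frac12\left(1-\sqrt{\frac{(1+\eta^{H-t}\Delta^2)^n-1}{2}}\right),$$ where the infimum is over all tests $\psi:\{0,1\}^n\to\{0,1\}$. In particular, if $$n\le \frac{\ln\big(1+2(1-2\epsilon)^2\big)}{\eta^{H-t}\Delta^2},$$ then every test $\psi$ has $\max_{i\in\{0,1\}}\mathbb{P}_i(\psi(R^{1:n})\neq i)\ge\epsilon$.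
   Context: For distributions $P\ll Q$, $\chi^2(P\|Q)=\int (dP/dQ-1)^2\,dQ$. For a Markov kernel $K$, $PK$ is the pushforward $\int K(\cdot\mid x)\,dP(x)$, and the $\chi^2$-contraction coefficient is $\eta_{\chi^2}(K)=\sup\{\chi^2(PK\|QK)/\chi^2(P\|Q): P\ll Q,\ 0<\chi^2(P\|Q)<\infty\}$. *)

theory Defs
  imports "HOL-Probability.Probability"
begin

text \<open>Chi-square divergence chi2(P||Q) = integral of (dP/dQ - 1)^2 dQ for P << Q
  (value infinity when P is not absolutely continuous w.r.t. Q).
  Note: absolutely_continuous Q P means P << Q.\<close>
definition chi2 :: "'a measure \<Rightarrow> 'a measure \<Rightarrow> ennreal" where
  "chi2 P Q =
     (if absolutely_continuous Q P
      then (\<integral>\<^sup>+ x. ennreal ((enn2real (RN_deriv Q P x) - 1)\<^sup>2) \<partial>Q)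
      else \<infinity>)"

definition chi2_contraction :: "'a measure \<Rightarrow> ('a \<Rightarrow> 'a measure) \<Rightarrow> ennreal" where
  "chi2_contraction M K =
     (SUP PQ \<in> {(P, Q). P \<in> space (prob_algebra M) \<and> Q \<in> space (prob_algebra M) \<and>
                       absolutely_continuous Q P \<and> 0 < chi2 P Q \<and> chi2 P Q < \<infinity>}.
        chi2 (bind (fst PQ) K) (bind (snd PQ) K) / chi2 (fst PQ) (snd PQ))"

text \<open>Law of Z_{t+k} given law P of Z_t, where Z_{u+1} | Z_u ~ K u.\<close>
fun propagate :: "(nat \<Rightarrow> 'a \<Rightarrow> 'a measure) \<Rightarrow> nat \<Rightarrow> nat \<Rightarrow> 'a measure \<Rightarrow> 'a measure" where
  "propagate K t 0 P = P"
| "propagate K t (Suc k) P = bind (propagate K t k P) (K (t + k))"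

end

theory Submission
  imports Defs
begin


lemma bern_part:
  fixes p0 p1 c :: real and n :: nat and A :: "(nat \<Rightarrow> bool) set"
  assumes p0: "0 \<le> p0" "p0 \<le> 1" and p1: "0 < p1" "p1 < 1"
    and chi: "(p0 - p1)\<^sup>2 / (p1 * (1 - p1)) \<le> c"
  shows "measure_pmf.prob (Pi_pmf {..<n} False (\<lambda>_. bernoulli_pmf p1)) A
       - measure_pmf.prob (Pi_pmf {..<n} False (\<lambda>_. bernoulli_pmf p0)) A
       \<le> sqrt (((1 + c) ^ n - 1) / 2)"
proof -
  define R0 where "R0 = Pi_pmf {..<n} False (\<lambda>_. bernoulli_pmf p0)"
  define R1 where "R1 = Pi_pmf {..<n} False (\<lambda>_. bernoulli_pmf p1)"
  define S where "S = PiE_dflt {..<n} False (\<lambda>_. (UNIV :: bool set))"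
  define q0 where "q0 = (\<lambda>b. pmf (bernoulli_pmf p0) b)"
  define q1 where "q1 = (\<lambda>b. pmf (bernoulli_pmf p1) b)"
  define l where "l = (\<lambda>b. q0 b / q1 b)"
  define L where "L = (\<lambda>x::nat\<Rightarrow>bool. \<Prod>i<n. l (x i))"
  define chv where "chv = (p0 - p1)\<^sup>2 / (p1 * (1 - p1))"
  have finS: "finite S" unfolding S_def by (intro finite_PiE_dflt) auto
  have q1pos: "q1 b > 0" for b using p1 by (cases b) (auto simp: q1_def)
  have q0l: "q0 b = l b * q1 b" for b using q1pos[of b] by (simp add: l_def)
  have setR0: "set_pmf R0 \<subseteq> S" unfolding R0_def S_def
    using set_Pi_pmf_subset'[of "{..<n}" False "\<lambda>_. bernoulli_pmf p0"] by (auto simp: PiE_dflt_def)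
  have setR1: "set_pmf R1 \<subseteq> S" unfolding R1_def S_def
    using set_Pi_pmf_subset'[of "{..<n}" False "\<lambda>_. bernoulli_pmf p1"] by (auto simp: PiE_dflt_def)
  have r1: "pmf R1 x = (\<Prod>i<n. q1 (x i))" if "x \<in> S" for x
    unfolding R1_def q1_def using that by (subst pmf_Pi') (auto simp: S_def PiE_dflt_def)
  have r0: "pmf R0 x = L x * pmf R1 x" if "x \<in> S" for x
  proof -
    have "pmf R0 x = (\<Prod>i<n. q0 (x i))"
      unfolding R0_def q0_def using that by (subst pmf_Pi') (auto simp: S_def PiE_dflt_def)
    also have "\<dots> = L x * pmf R1 x" unfolding L_def r1[OF that] q0l prod.distrib ..
    finally show ?thesis .
  qed
  have sum1: "(\<Sum>x\<in>S. pmf R1 x) = 1" by (rule sum_pmf_eq_1[OF finS setR1])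
  have sum0: "(\<Sum>x\<in>S. L x * pmf R1 x) = 1"
    using sum_pmf_eq_1[OF finS setR0] r0 by (metis (no_types, lifting) sum.cong)
  have El2: "measure_pmf.expectation (bernoulli_pmf p1) (\<lambda>v. (l v)\<^sup>2) = 1 + chv"
  proof -
    have "measure_pmf.expectation (bernoulli_pmf p1) (\<lambda>v. (l v)\<^sup>2) = (p0/p1)\<^sup>2 * p1 + ((1-p0)/(1-p1))\<^sup>2 * (1-p1)"
      using p0 p1 by (simp add: l_def q0_def q1_def)
    also have "\<dots> = 1 + chv"
    proof -
      have a: "p1 \<noteq> 0" "1 - p1 \<noteq> 0" "p1 * (1 - p1) \<noteq> 0" using p1 by auto
      show ?thesis unfolding chv_def using a
        by (simp add: divide_simps power2_eq_square) (simp add: algebra_simps)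
    qed
    finally show ?thesis .
  qed
  have sumL2: "(\<Sum>x\<in>S. (L x)\<^sup>2 * pmf R1 x) = (1 + chv) ^ n"
  proof -
    have "(\<Sum>x\<in>S. (L x)\<^sup>2 * pmf R1 x) = measure_pmf.expectation R1 (\<lambda>y. \<Prod>i\<in>{..<n}. (l (y i))\<^sup>2)"
      by (subst integral_measure_pmf_real[OF finS]) (use setR1 in \<open>auto simp: L_def power_mult_distrib prod_power_distrib\<close>)
    also have "\<dots> = (\<Prod>i\<in>{..<n}. measure_pmf.expectation (bernoulli_pmf p1) (\<lambda>v. (l v)\<^sup>2))"
      unfolding R1_def
      by (rule expectation_prod_Pi_pmf) (auto intro!: integrable_measure_pmf_finite)
    also have "\<dots> = (1 + chv) ^ n" by (simp add: El2)
    finally show ?thesis .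
  qed
  define Y where "Y = (\<lambda>x. 1 - L x)"
  define s where "s = (\<lambda>x. if x \<in> A then 1 else (-1::real))"
  have V: "(\<Sum>x\<in>S. pmf R1 x * (Y x)\<^sup>2) = (1 + chv) ^ n - 1"
  proof -
    have "(\<Sum>x\<in>S. pmf R1 x * (Y x)\<^sup>2) = (\<Sum>x\<in>S. pmf R1 x - 2 * (L x * pmf R1 x) + (L x)\<^sup>2 * pmf R1 x)"
      by (intro sum.cong) (auto simp: Y_def power2_eq_square algebra_simps)
    also have "\<dots> = 1 - 2 * 1 + (1 + chv) ^ n"
      by (simp add: sum.distrib sum_subtractf sum_distrib_left[symmetric] sum1 sum0 sumL2)
    finally show ?thesis by simp
  qed
  have probA: "measure_pmf.prob R A = (\<Sum>x\<in>S. pmf R x * indicator A x)" if "set_pmf R \<subseteq> S" for R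
  proof -
    have "measure_pmf.prob R A = measure_pmf.expectation R (indicator A)" by simp
    also have "\<dots> = (\<Sum>x\<in>S. pmf R x * indicator A x)"
      by (subst integral_measure_pmf_real[OF finS]) (use that in \<open>auto simp: mult.commute\<close>)
    finally show ?thesis .
  qed
  have key: "2 * (measure_pmf.prob R1 A - measure_pmf.prob R0 A) = (\<Sum>x\<in>S. pmf R1 x * Y x * s x)"
  proof -
    have "(\<Sum>x\<in>S. pmf R1 x * Y x * s x) = (\<Sum>x\<in>S. 2 * (pmf R1 x * indicator A x) - 2 * (pmf R0 x * indicator A x) - pmf R1 x + L x * pmf R1 x)"
      by (intro sum.cong) (auto simp: Y_def s_def r0 algebra_simps split: split_indicator)
    also have "\<dots> = 2 * (\<Sum>x\<in>S. pmf R1 x * indicator A x) - 2 * (\<Sum>x\<in>S. pmf R0 x * indicator A x) - (\<Sum>x\<in>S. pmf R1 x) + (\<Sum>x\<in>S. L x * pmf R1 x)"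
      by (simp only: sum.distrib sum_subtractf sum_distrib_left)
    also have "\<dots> = 2 * (measure_pmf.prob R1 A - measure_pmf.prob R0 A)"
      using probA[OF setR1] probA[OF setR0] sum1 sum0 by simp
    finally show ?thesis by simp
  qed
  have nn: "0 \<le> (\<Sum>x\<in>S. pmf R1 x * (Y x)\<^sup>2)" by (intro sum_nonneg) auto
  have eqcs: "(\<Sum>x\<in>S. pmf R1 x * Y x * s x) = (\<Sum>x\<in>S. (sqrt (pmf R1 x) * Y x) * (sqrt (pmf R1 x) * s x))"
    by (intro sum.cong) (auto simp: algebra_simps)
  have "(\<Sum>x\<in>S. pmf R1 x * Y x * s x)\<^sup>2 \<le> (\<Sum>x\<in>S. (sqrt (pmf R1 x) * Y x)\<^sup>2) * (\<Sum>x\<in>S. (sqrt (pmf R1 x) * s x)\<^sup>2)"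
    unfolding eqcs by (rule Cauchy_Schwarz_ineq_sum)
  also have "(\<Sum>x\<in>S. (sqrt (pmf R1 x) * Y x)\<^sup>2) = (\<Sum>x\<in>S. pmf R1 x * (Y x)\<^sup>2)"
    by (intro sum.cong) (auto simp: power_mult_distrib)
  also have "(\<Sum>x\<in>S. (sqrt (pmf R1 x) * s x)\<^sup>2) = (\<Sum>x\<in>S. pmf R1 x)"
    by (intro sum.cong) (auto simp: power_mult_distrib s_def)
  finally have cs: "(2 * (measure_pmf.prob R1 A - measure_pmf.prob R0 A))\<^sup>2 \<le> (1 + chv) ^ n - 1"
    unfolding key V sum1 by simp
  have mono: "(1 + chv) ^ n \<le> (1 + c) ^ n"
    by (intro power_mono) (use chi p1 in \<open>auto simp: chv_def\<close>)
  define D where "D = measure_pmf.prob R1 A - measure_pmf.prob R0 A"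
  have "(2 * D)\<^sup>2 = 4 * D\<^sup>2" by (simp add: power_mult_distrib)
  then have "4 * D\<^sup>2 \<le> (1 + chv) ^ n - 1" using cs unfolding D_def by simp
  moreover have "0 \<le> (1 + chv) ^ n - 1" using V nn by simp
  ultimately have "D\<^sup>2 \<le> ((1 + c) ^ n - 1) / 2" using mono
  proof -
    assume a: "4 * D\<^sup>2 \<le> (1 + chv) ^ n - 1" "0 \<le> (1 + chv) ^ n - 1" "(1 + chv) ^ n \<le> (1 + c) ^ n"
    define V where "V = (1 + chv) ^ n - 1"
    define W where "W = (1 + c) ^ n - 1"
    have "4 * D\<^sup>2 \<le> V" "0 \<le> V" "V \<le> W" using a unfolding V_def W_def by auto
    then have "D\<^sup>2 \<le> W / 2" by linarith
    then show ?thesis unfolding W_def .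
  qed
  then have "sqrt (D\<^sup>2) \<le> sqrt (((1 + c) ^ n - 1) / 2)" by (rule real_sqrt_le_mono)
  then have "D \<le> sqrt (((1 + c) ^ n - 1) / 2)" by simp
  then show ?thesis using D_def R0_def R1_def by simp
qed


lemma chi2_density:
  assumes P: "prob_space P" and Q: "prob_space Q" and sets: "sets P = sets Q"
    and ac: "absolutely_continuous Q P"
  shows "density Q (\<lambda>x. ennreal (enn2real (RN_deriv Q P x))) = P"
    and "\<And>x. 0 \<le> enn2real (RN_deriv Q P x)"
    and "(\<lambda>x. enn2real (RN_deriv Q P x)) \<in> borel_measurable Q"
    and "integrable Q (\<lambda>x. enn2real (RN_deriv Q P x))"
proof -
  interpret Q: prob_space Q by fact
  interpret P: prob_space P by fact
  have sfP: "sigma_finite_measure P" by unfold_locales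
  have d: "density Q (RN_deriv Q P) = P" using Q.density_RN_deriv[OF ac sets] .
  have fin: "AE x in Q. RN_deriv Q P x \<noteq> \<infinity>" using Q.RN_deriv_finite[OF sfP ac sets] .
  have "density Q (\<lambda>x. ennreal (enn2real (RN_deriv Q P x))) = density Q (RN_deriv Q P)"
    by (rule density_cong) (use fin in \<open>auto simp: ennreal_enn2real_if\<close>)
  then show dd: "density Q (\<lambda>x. ennreal (enn2real (RN_deriv Q P x))) = P" using d by (rule trans)
  show "\<And>x. 0 \<le> enn2real (RN_deriv Q P x)" by simp
  show m: "(\<lambda>x. enn2real (RN_deriv Q P x)) \<in> borel_measurable Q" by measurable
  have "(\<integral>\<^sup>+x. ennreal (enn2real (RN_deriv Q P x)) \<partial>Q) = emeasure (density Q (\<lambda>x. ennreal (enn2real (RN_deriv Q P x)))) (space Q)"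
    by (subst emeasure_density) (use m in auto)
  also have "\<dots> = emeasure P (space P)" unfolding dd using sets_eq_imp_space_eq[OF sets] by simp
  also have "\<dots> < \<infinity>" by (simp add: P.emeasure_space_1)
  finally show "integrable Q (\<lambda>x. enn2real (RN_deriv Q P x))"
    by (intro integrableI_nonneg m) auto
qed

lemma sq_ineq: "2*a*y - a\<^sup>2 \<le> (y::real)\<^sup>2"
proof -
  have "0 \<le> (y - a)\<^sup>2" by simp
  moreover have "2*a*y = 2*y*a" by simp
  ultimately show ?thesis unfolding power2_diff by linarith
qed

lemma chi2_dpi:
  fixes a b :: real
  assumes P: "prob_space P" and Q: "prob_space Q" and sets: "sets P = sets Q"
    and ac: "absolutely_continuous Q P" and A: "A \<in> sets Q"
  shows "ennreal (2*a*(measure P A - measure Q A) - a\<^sup>2 * measure Q A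
           - 2*b*(measure P A - measure Q A) - b\<^sup>2 * (1 - measure Q A)) \<le> chi2 P Q"
proof -
  interpret Q: prob_space Q by fact
  interpret P: prob_space P by fact
  define r where "r = (\<lambda>x. enn2real (RN_deriv Q P x))"
  note rd0 = chi2_density[OF P Q sets ac]
  have rd: "density Q (\<lambda>x. ennreal (r x)) = P" "\<And>x. 0 \<le> r x" "r \<in> borel_measurable Q" "integrable Q r"
    using rd0 unfolding r_def by auto
  have rm[measurable]: "r \<in> borel_measurable Q" using rd(3) .
  define C where "C = space Q - A"
  have C: "C \<in> sets Q" using A unfolding C_def by auto
  have sp: "space P = space Q" using sets by (rule sets_eq_imp_space_eq)
  have PB: "measure P B = (\<integral>x. indicator B x * r x \<partial>Q)" if B: "B \<in> sets Q" for B
  proof -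
    have "measure P B = (\<integral>x. indicator B x \<partial>P)" using B sets sets.sets_into_space[OF B] sp
      by (simp add: Int_absorb2)
    also have "\<dots> = (\<integral>x. indicator B x \<partial>(density Q (\<lambda>x. ennreal (r x))))"
      using rd(1) by simp
    also have "\<dots> = (\<integral>x. r x *\<^sub>R indicator B x \<partial>Q)"
      by (subst integral_density) (use B rd(2) in auto)
    finally show ?thesis by (simp add: mult.commute)
  qed
  have QB: "measure Q B = (\<integral>x. indicator B x \<partial>Q)" if B: "B \<in> sets Q" for B
    using sets.sets_into_space[OF B] by (simp add: Int_absorb2)
  have iB: "integrable Q (\<lambda>x. indicator B x * r x)" if "B \<in> sets Q" for B
    using integrable_mult_indicator[OF that rd(4)] by simp
  have iB1: "integrable Q (\<lambda>x. indicator B x :: real)" if "B \<in> sets Q" for B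
    using that by (simp add: Q.emeasure_eq_measure)
  define h where "h = (\<lambda>x. 2*a*(indicator A x * r x) - 2*a*indicator A x - a\<^sup>2 * indicator A x
      + (2*b*(indicator C x * r x) - 2*b*indicator C x - b\<^sup>2 * indicator C x))"
  have i1: "integrable Q (\<lambda>x. indicator A x * r x)" by (rule iB[OF A])
  have i2: "integrable Q (\<lambda>x. indicator C x * r x)" by (rule iB[OF C])
  have i3: "integrable Q (\<lambda>x. indicator A x :: real)" by (rule iB1[OF A])
  have i4: "integrable Q (\<lambda>x. indicator C x :: real)" by (rule iB1[OF C])
  have ih: "integrable Q h" unfolding h_def
    by (simp add: i1 i2 i3 i4)
  have inth: "(\<integral>x. h x \<partial>Q) = 2*a*(measure P A - measure Q A) - a\<^sup>2 * measure Q A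
           - 2*b*(measure P A - measure Q A) - b\<^sup>2 * (1 - measure Q A)"
  proof -
    have "(\<integral>x. h x \<partial>Q) = 2*a*measure P A - 2*a*measure Q A - a\<^sup>2*measure Q A
       + (2*b*measure P C - 2*b*measure Q C - b\<^sup>2*measure Q C)"
      unfolding h_def PB[OF A] PB[OF C] QB[OF A] QB[OF C]
      by (simp add: i1 i2 i3 i4)
    moreover have "measure Q C = 1 - measure Q A" unfolding C_def using Q.prob_compl[OF A] .
    moreover have "measure P C = 1 - measure P A" unfolding C_def sp[symmetric]
      using P.prob_compl A sets by simp
    ultimately show ?thesis by (simp add: algebra_simps)
  qed
  define g where "g = (\<lambda>x. (r x - 1)\<^sup>2)"
  have chi: "chi2 P Q = (\<integral>\<^sup>+x. ennreal (g x) \<partial>Q)" unfolding chi2_def g_def r_def using ac by simp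
  have hg: "h x \<le> g x" if "x \<in> space Q" for x
  proof -
    have "2*a*(r x - 1) - a\<^sup>2 \<le> (r x - 1)\<^sup>2" "2*b*(r x - 1) - b\<^sup>2 \<le> (r x - 1)\<^sup>2"
      by (rule sq_ineq)+
    moreover have "2*a*(r x - 1) = 2*a*r x - 2*a" "2*b*(r x - 1) = 2*b*r x - 2*b" by (simp_all add: algebra_simps)
    ultimately show ?thesis using that unfolding h_def g_def C_def by (cases "x \<in> A") (simp_all add: indicator_def)
  qed
  show ?thesis
  proof (cases "chi2 P Q = \<infinity>")
    case True then show ?thesis by simp
  next
    case False
    have ig: "integrable Q g"
      by (rule integrableI_nonneg) (use False chi in \<open>auto simp: g_def top.not_eq_extremum\<close>)
    have "(\<integral>x. h x \<partial>Q) \<le> (\<integral>x. g x \<partial>Q)" by (rule integral_mono[OF ih ig hg])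
    then have "ennreal (\<integral>x. h x \<partial>Q) \<le> ennreal (\<integral>x. g x \<partial>Q)" by (rule ennreal_leI)
    also have "\<dots> = chi2 P Q" unfolding chi by (rule nn_integral_eq_integral[symmetric]) (use ig in \<open>auto simp: g_def\<close>)
    finally show ?thesis unfolding inth .
  qed
qed


lemma chi2_zero_eq:
  assumes P: "prob_space P" and Q: "prob_space Q" and sets: "sets P = sets Q"
    and ac: "absolutely_continuous Q P" and z: "chi2 P Q = 0"
  shows "P = Q"
proof -
  define r where "r = (\<lambda>x. enn2real (RN_deriv Q P x))"
  note rd0 = chi2_density[OF P Q sets ac]
  have rd: "density Q (\<lambda>x. ennreal (r x)) = P" "r \<in> borel_measurable Q"
    using rd0 unfolding r_def by auto
  have "(\<integral>\<^sup>+x. ennreal ((r x - 1)\<^sup>2) \<partial>Q) = 0" using z ac unfolding chi2_def r_def by simp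
  then have "AE x in Q. ennreal ((r x - 1)\<^sup>2) = 0"
    by (subst nn_integral_0_iff_AE[symmetric]) (use rd(2) in auto)
  then have ae: "AE x in Q. ennreal (r x) = 1" by eventually_elim simp
  have "P = density Q (\<lambda>x. ennreal (r x))" using rd(1) by simp
  also have "\<dots> = density Q (\<lambda>_. 1)" by (rule density_cong) (use rd(2) ae in auto)
  also have "\<dots> = Q" by (rule density_1)
  finally show ?thesis .
qed

lemma chi2_self:
  assumes Q: "prob_space Q"
  shows "chi2 Q Q = 0"
proof -
  interpret Q: prob_space Q by fact
  have ac: "absolutely_continuous Q Q" unfolding absolutely_continuous_def by simp
  have "AE x in Q. 1 = RN_deriv Q Q x"
    by (rule Q.RN_deriv_unique) (auto simp: density_1)
  then have "AE x in Q. ennreal ((enn2real (RN_deriv Q Q x) - 1)\<^sup>2) = 0"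
    by eventually_elim (metis diff_self enn2real_1 ennreal_0 zero_power2)
  then have "(\<integral>\<^sup>+x. ennreal ((enn2real (RN_deriv Q Q x) - 1)\<^sup>2) \<partial>Q) = (\<integral>\<^sup>+x. 0 \<partial>Q)"
    by (rule nn_integral_cong_AE)
  then show ?thesis unfolding chi2_def using ac by simp
qed

lemma ac_bind:
  assumes P: "P \<in> space (prob_algebra M)" and Q: "Q \<in> space (prob_algebra M)"
    and ac: "absolutely_continuous Q P" and K: "K \<in> M \<rightarrow>\<^sub>M prob_algebra M"
  shows "absolutely_continuous (bind Q K) (bind P K)"
  unfolding absolutely_continuous_def
proof
  fix N assume N: "N \<in> null_sets (bind Q K)"
  have sQ: "sets (bind Q K) = sets M" using sets_bind'[OF Q K] .
  have sP: "sets (bind P K) = sets M" using sets_bind'[OF P K] .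
  have NM: "N \<in> sets M" using N sQ by auto
  have sPQ: "sets P = sets Q" using P Q by (simp add: space_prob_algebra)
  have Km: "(\<lambda>x. emeasure (K x) N) \<in> borel_measurable M"
    using measurable_compose[OF measurable_prob_algebraD[OF K] measurable_emeasure_subprob_algebra[OF NM]] by simp
  have KmQ: "(\<lambda>x. emeasure (K x) N) \<in> borel_measurable Q"
    using Km Q by (simp add: space_prob_algebra cong: measurable_cong_sets)
  have KmP: "(\<lambda>x. emeasure (K x) N) \<in> borel_measurable P"
    using Km P by (simp add: space_prob_algebra cong: measurable_cong_sets)
  have "(\<integral>\<^sup>+x. emeasure (K x) N \<partial>Q) = 0"
    using null_setsD1[OF N] emeasure_bind_prob_algebra[OF Q K NM] by simp
  then have "AE x in Q. emeasure (K x) N = 0" using nn_integral_0_iff_AE[OF KmQ] by simp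
  then have "AE x in P. emeasure (K x) N = 0" by (rule absolutely_continuous_AE[OF sPQ ac])
  then have "(\<integral>\<^sup>+x. emeasure (K x) N \<partial>P) = 0" using nn_integral_0_iff_AE[OF KmP] by simp
  then show "N \<in> null_sets (bind P K)"
    using emeasure_bind_prob_algebra[OF P K NM] NM sP by (intro null_setsI) auto
qed

lemma chi2_step:
  fixes C \<eta> :: real
  assumes P: "P \<in> space (prob_algebra M)" and Q: "Q \<in> space (prob_algebra M)"
    and ac: "absolutely_continuous Q P" and c: "chi2 P Q \<le> ennreal C"
    and K: "K \<in> M \<rightarrow>\<^sub>M prob_algebra M" and ct: "chi2_contraction M K \<le> ennreal \<eta>"
    and eta: "0 \<le> \<eta>"
  shows "bind P K \<in> space (prob_algebra M)" "bind Q K \<in> space (prob_algebra M)"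
    "absolutely_continuous (bind Q K) (bind P K)"
    "chi2 (bind P K) (bind Q K) \<le> ennreal (\<eta> * C)"
proof -
  show "bind P K \<in> space (prob_algebra M)"
    using sets_bind'[OF P K] prob_space_bind'[OF P K] by (simp add: space_prob_algebra)
  show bQ: "bind Q K \<in> space (prob_algebra M)"
    using sets_bind'[OF Q K] prob_space_bind'[OF Q K] by (simp add: space_prob_algebra)
  show "absolutely_continuous (bind Q K) (bind P K)" by (rule ac_bind[OF P Q ac K])
  have pP: "prob_space P" and pQ: "prob_space Q" and sPQ: "sets P = sets Q"
    using P Q by (auto simp: space_prob_algebra)
  show "chi2 (bind P K) (bind Q K) \<le> ennreal (\<eta> * C)"
  proof (cases "chi2 P Q = 0")
    case True
    then have "P = Q" by (rule chi2_zero_eq[OF pP pQ sPQ ac])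
    then show ?thesis using chi2_self[OF prob_space_bind'[OF Q K]] by simp
  next
    case False
    then have pos: "0 < chi2 P Q" by (simp add: zero_less_iff_neq_zero)
    have fin: "chi2 P Q < \<infinity>" using c by (simp add: le_less_trans)
    have Cpos: "0 \<le> C" proof (rule ccontr)
      assume "\<not> 0 \<le> C"
      then have "ennreal C = 0" by (simp add: ennreal_neg)
      then show False using pos c by simp
    qed
    have mem: "(P, Q) \<in> {(P, Q). P \<in> space (prob_algebra M) \<and> Q \<in> space (prob_algebra M) \<and>
                       absolutely_continuous Q P \<and> 0 < chi2 P Q \<and> chi2 P Q < \<infinity>}"
      using P Q ac pos fin by simp
    have ratio: "chi2 (bind P K) (bind Q K) / chi2 P Q \<le> ennreal \<eta>"
      using SUP_upper[OF mem, of "\<lambda>PQ. chi2 (bind (fst PQ) K) (bind (snd PQ) K) / chi2 (fst PQ) (snd PQ)"] ct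
      unfolding chi2_contraction_def by simp
    have "chi2 (bind P K) (bind Q K) = chi2 P Q * chi2 (bind P K) (bind Q K) / chi2 P Q"
    proof -
      have "chi2 (bind P K) (bind Q K) * chi2 P Q / chi2 P Q = chi2 (bind P K) (bind Q K)"
        by (rule mult_divide_eq_ennreal) (use False fin in auto)
      then show ?thesis by (simp only: mult.commute)
    qed
    also have "\<dots> = chi2 P Q * (chi2 (bind P K) (bind Q K) / chi2 P Q)"
      by (simp add: ennreal_times_divide)
    also have "\<dots> \<le> ennreal C * ennreal \<eta>" by (intro mult_mono c ratio) auto
    also have "\<dots> = ennreal (\<eta> * C)" using Cpos eta by (simp add: ennreal_mult mult.commute)
    finally show ?thesis .
  qed
qed



lemma bern_final:
  fixes p0 p1 c :: real and n :: nat and \<psi> :: "(nat \<Rightarrow> bool) \<Rightarrow> bool"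
  assumes p0: "0 \<le> p0" "p0 \<le> 1" and p1: "0 \<le> p1" "p1 \<le> 1" and c: "0 \<le> c"
    and dpi: "\<And>a b. 2*a*(p0 - p1) - a\<^sup>2 * p1 - 2*b*(p0 - p1) - b\<^sup>2 * (1 - p1) \<le> c"
  shows "1/2 * (1 - sqrt (((1 + c) ^ n - 1) / 2)) \<le>
     max (measure_pmf.prob (Pi_pmf {..<n} False (\<lambda>_. bernoulli_pmf p0)) {r. \<psi> r \<noteq> False})
         (measure_pmf.prob (Pi_pmf {..<n} False (\<lambda>_. bernoulli_pmf p1)) {r. \<psi> r \<noteq> True})"
proof -
  define R0 where "R0 = Pi_pmf {..<n} False (\<lambda>_. bernoulli_pmf p0)"
  define R1 where "R1 = Pi_pmf {..<n} False (\<lambda>_. bernoulli_pmf p1)"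
  define A where "A = {r. \<psi> r}"
  have e1: "{r. \<psi> r \<noteq> False} = A" unfolding A_def by auto
  have e2: "{r. \<psi> r \<noteq> True} = UNIV - A" unfolding A_def by auto
  have c1: "measure_pmf.prob R1 (UNIV - A) = 1 - measure_pmf.prob R1 A"
    using measure_pmf.prob_compl[of A R1] by simp
  have sq0: "0 \<le> sqrt (((1 + c) ^ n - 1) / 2)" using c by simp
  have main: "measure_pmf.prob R1 A - measure_pmf.prob R0 A \<le> sqrt (((1 + c) ^ n - 1) / 2)"
  proof (cases "p1 = 0 \<or> p1 = 1")
    case True
    have "p0 = p1"
    proof (cases "p1 = 0")
      case True
      show ?thesis
      proof (rule ccontr)
        assume "p0 \<noteq> p1"
        then have "p0 > 0" using True p0 by simp
        have "2 * ((c + 1) / (2 * p0)) * (p0 - p1) - ((c + 1) / (2 * p0))\<^sup>2 * p1 - 2 * 0 * (p0 - p1) - 0\<^sup>2 * (1 - p1) \<le> c"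
          by (rule dpi)
        then show False using True \<open>p0 > 0\<close> by (simp add: field_simps)
      qed
    next
      case False
      then have "p1 = 1" using \<open>p1 = 0 \<or> p1 = 1\<close> by simp
      show ?thesis
      proof (rule ccontr)
        assume "p0 \<noteq> p1"
        then have "1 - p0 > 0" using \<open>p1 = 1\<close> p0 by simp
        have "2 * 0 * (p0 - p1) - 0\<^sup>2 * p1 - 2 * ((c + 1) / (2 * (1 - p0))) * (p0 - p1) - ((c + 1) / (2 * (1 - p0)))\<^sup>2 * (1 - p1) \<le> c"
          by (rule dpi)
        then show False using \<open>p1 = 1\<close> \<open>1 - p0 > 0\<close> by (simp add: field_simps)
      qed
    qed
    then show ?thesis unfolding R0_def R1_def using sq0 by simp
  next
    case False
    then have p1': "0 < p1" "p1 < 1" using p1 by auto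
    define d where "d = p0 - p1"
    have "2*(d/p1)*(p0 - p1) - (d/p1)\<^sup>2 * p1 - 2*(-d/(1-p1))*(p0 - p1) - (-d/(1-p1))\<^sup>2 * (1 - p1) \<le> c"
      by (rule dpi)
    moreover have "2*(d/p1)*(p0 - p1) - (d/p1)\<^sup>2 * p1 - 2*(-d/(1-p1))*(p0 - p1) - (-d/(1-p1))\<^sup>2 * (1 - p1)
        = (p0 - p1)\<^sup>2 / (p1 * (1 - p1))"
    proof -
      have a: "p1 \<noteq> 0" "1 - p1 \<noteq> 0" using p1' by auto
      show ?thesis unfolding d_def using a
        by (simp add: divide_simps power2_eq_square) (simp add: algebra_simps)
    qed
    ultimately have "(p0 - p1)\<^sup>2 / (p1 * (1 - p1)) \<le> c" by simp
    from bern_part[OF p0 p1' this, of n A] show ?thesis unfolding R0_def R1_def .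
  qed
  have "1/2 * (1 - sqrt (((1 + c) ^ n - 1) / 2)) \<le> (measure_pmf.prob R0 A + measure_pmf.prob R1 (UNIV - A)) / 2"
    using main c1 by simp
  also have "\<dots> \<le> max (measure_pmf.prob R0 A) (measure_pmf.prob R1 (UNIV - A))" by simp
  finally show ?thesis unfolding e1 e2 R0_def R1_def .
qed

theorem corollary3:
  fixes M :: "'a measure"
    and K :: "nat \<Rightarrow> 'a \<Rightarrow> 'a measure"
    and P0 P1 :: "'a measure"
    and g :: "'a \<Rightarrow> bool"
    and t H n :: nat
    and \<Delta> \<eta> \<epsilon> :: real
  assumes t_range: "1 \<le> t" "t \<le> H"
    and P0_prob: "P0 \<in> space (prob_algebra M)"
    and P1_prob: "P1 \<in> space (prob_algebra M)"
    and abs_cont: "absolutely_continuous P1 P0"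
    and chi2_Delta: "chi2 P0 P1 = ennreal (\<Delta>\<^sup>2)"
    and K_markov: "\<And>u. t \<le> u \<Longrightarrow> u < H \<Longrightarrow> K u \<in> M \<rightarrow>\<^sub>M prob_algebra M"
    and K_contr: "\<And>u. t \<le> u \<Longrightarrow> u < H \<Longrightarrow> chi2_contraction M (K u) \<le> ennreal \<eta>"
    and eta_range: "0 \<le> \<eta>" "\<eta> < 1"
    and g_meas: "g \<in> M \<rightarrow>\<^sub>M count_space UNIV"
    and eps_range: "0 < \<epsilon>" "\<epsilon> < 1/2"
  shows
    "let p0 = measure (propagate K t (H - t) P0) {z \<in> space M. g z};
         p1 = measure (propagate K t (H - t) P1) {z \<in> space M. g z};
         R0 = Pi_pmf {..<n} False (\<lambda>_. bernoulli_pmf p0);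
         R1 = Pi_pmf {..<n} False (\<lambda>_. bernoulli_pmf p1);
         err = (\<lambda>\<psi> :: (nat \<Rightarrow> bool) \<Rightarrow> bool.
                  max (measure_pmf.prob R0 {r. \<psi> r \<noteq> False})
                      (measure_pmf.prob R1 {r. \<psi> r \<noteq> True}))
     in (INF \<psi>. err \<psi>) \<ge>
          1/2 * (1 - sqrt (((1 + \<eta> ^ (H - t) * \<Delta>\<^sup>2) ^ n - 1) / 2))
        \<and> (real n * (\<eta> ^ (H - t) * \<Delta>\<^sup>2) \<le> ln (1 + 2 * (1 - 2 * \<epsilon>)\<^sup>2)
             \<longrightarrow> (\<forall>\<psi>. err \<psi> \<ge> \<epsilon>))"
proof -
  have prp: "propagate K t k P0 \<in> space (prob_algebra M) \<and> propagate K t k P1 \<in> space (prob_algebra M)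
      \<and> absolutely_continuous (propagate K t k P1) (propagate K t k P0)
      \<and> chi2 (propagate K t k P0) (propagate K t k P1) \<le> ennreal (\<eta> ^ k * \<Delta>\<^sup>2)" if "k \<le> H - t" for k
    using that
  proof (induction k)
    case 0
    then show ?case using P0_prob P1_prob abs_cont chi2_Delta by simp
  next
    case (Suc k)
    then have IH: "propagate K t k P0 \<in> space (prob_algebra M)" "propagate K t k P1 \<in> space (prob_algebra M)"
      "absolutely_continuous (propagate K t k P1) (propagate K t k P0)"
      "chi2 (propagate K t k P0) (propagate K t k P1) \<le> ennreal (\<eta> ^ k * \<Delta>\<^sup>2)" by auto
    have u: "t \<le> t + k" "t + k < H" using Suc.prems by auto
    note st = chi2_step[OF IH K_markov[OF u] K_contr[OF u] eta_range(1)]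
    then show ?case by (simp add: mult.assoc)
  qed
  define Q0 where "Q0 = propagate K t (H - t) P0"
  define Q1 where "Q1 = propagate K t (H - t) P1"
  define c where "c = \<eta> ^ (H - t) * \<Delta>\<^sup>2"
  define A where "A = {z \<in> space M. g z}"
  have c0: "0 \<le> c" unfolding c_def using eta_range by simp
  have PQ: "Q0 \<in> space (prob_algebra M)" "Q1 \<in> space (prob_algebra M)" "absolutely_continuous Q1 Q0"
    "chi2 Q0 Q1 \<le> ennreal c"
    using prp[of "H - t"] unfolding Q0_def Q1_def c_def by auto
  have pQ0: "prob_space Q0" and pQ1: "prob_space Q1" and s0: "sets Q0 = sets M" and s1: "sets Q1 = sets M"
    using PQ by (auto simp: space_prob_algebra)
  have AM: "A \<in> sets M"
  proof -
    have "g -` {True} \<inter> space M \<in> sets M" by (rule measurable_sets[OF g_meas]) simp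
    moreover have "g -` {True} \<inter> space M = A" unfolding A_def by auto
    ultimately show ?thesis by simp
  qed
  define p0 where "p0 = measure Q0 A"
  define p1 where "p1 = measure Q1 A"
  have p0r: "0 \<le> p0" "p0 \<le> 1" unfolding p0_def using prob_space.prob_le_1[OF pQ0] by auto
  have p1r: "0 \<le> p1" "p1 \<le> 1" unfolding p1_def using prob_space.prob_le_1[OF pQ1] by auto
  have dpi: "2*a*(p0 - p1) - a\<^sup>2 * p1 - 2*b*(p0 - p1) - b\<^sup>2 * (1 - p1) \<le> c" for a b
  proof -
    have "ennreal (2*a*(p0 - p1) - a\<^sup>2 * p1 - 2*b*(p0 - p1) - b\<^sup>2 * (1 - p1)) \<le> chi2 Q0 Q1"
      unfolding p0_def p1_def
      by (rule chi2_dpi[OF pQ0 pQ1]) (use s0 s1 PQ(3) AM in auto)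
    also have "\<dots> \<le> ennreal c" by (rule PQ(4))
    finally show ?thesis using c0 by (simp add: ennreal_le_iff)
  qed
  define bnd where "bnd = 1/2 * (1 - sqrt (((1 + c) ^ n - 1) / 2))"
  define err where "err = (\<lambda>\<psi> :: (nat \<Rightarrow> bool) \<Rightarrow> bool.
                  max (measure_pmf.prob (Pi_pmf {..<n} False (\<lambda>_. bernoulli_pmf p0)) {r. \<psi> r \<noteq> False})
                      (measure_pmf.prob (Pi_pmf {..<n} False (\<lambda>_. bernoulli_pmf p1)) {r. \<psi> r \<noteq> True}))"
  have pw: "bnd \<le> err \<psi>" for \<psi>
    unfolding bnd_def err_def by (rule bern_final[OF p0r p1r c0 dpi])
  have inf: "bnd \<le> (INF \<psi>. err \<psi>)" by (rule cINF_greatest) (use pw in auto)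
  have second: "\<epsilon> \<le> err \<psi>" if hyp: "real n * c \<le> ln (1 + 2 * (1 - 2 * \<epsilon>)\<^sup>2)" for \<psi>
  proof -
    have "(1 + c) ^ n \<le> exp c ^ n" by (intro power_mono) (use c0 in auto)
    also have "\<dots> = exp (real n * c)" by (simp add: exp_of_nat_mult)
    also have "\<dots> \<le> exp (ln (1 + 2 * (1 - 2 * \<epsilon>)\<^sup>2))" using hyp by simp
    also have "\<dots> = 1 + 2 * (1 - 2 * \<epsilon>)\<^sup>2" by (simp add: add_pos_nonneg)
    finally have "((1 + c) ^ n - 1) / 2 \<le> (1 - 2 * \<epsilon>)\<^sup>2" by simp
    then have "sqrt (((1 + c) ^ n - 1) / 2) \<le> sqrt ((1 - 2 * \<epsilon>)\<^sup>2)" by (rule real_sqrt_le_mono)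
    also have "\<dots> = 1 - 2 * \<epsilon>" using eps_range by simp
    finally have "\<epsilon> \<le> bnd" unfolding bnd_def by simp
    then show ?thesis using pw[of \<psi>] by simp
  qed
  show ?thesis
    unfolding Let_def
    using inf second
    unfolding bnd_def err_def c_def p0_def p1_def Q0_def Q1_def A_def by auto
qed

end
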